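(* Let $T:\mathcal P(\mathbb R^n)\to\mathcal P(\mathbb R^n)$ be given by $TA=\{y\in\mathbb R^n:\ \langle x,y\rangle\ge 1\ \forall x\in A\}$. Then the class $\mathcal C=\{TK:K\subseteq\mathbb R^n\}$ consists exactly of $\mathbb R^n$ together with all closed convex sets $K\subseteq\mathbb R^n$ such that $0\notin K$ and $\lambda K\subseteq K$ for all $\lambda\ge 1$.
   Context: $\mathcal P(\mathbb R^n)$ is the power set of $\mathbb R^n$ and $\langle\cdot,\cdot\rangle$ the standard inner product. *)

theory Defs
  imports "HOL-Analysis.Analysis"
begin

definition polarT :: "'a::euclidean_space set \<Rightarrow> 'a set" where
  "polarT A = {y. \<forall>x\<in>A. inner x y \<ge> 1}"

end

theory Submission
  imports Defs
begin

lemma polar_sep: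
  fixes K :: "'a::euclidean_space set"
  assumes cl: "closed K" and cv: "convex K" and z: "0 \<notin> K"
    and sc: "\<forall>l::real. l \<ge> 1 \<longrightarrow> (\<lambda>x. l *\<^sub>R x) ` K \<subseteq> K"
    and y: "y \<notin> K"
  shows "\<exists>x. (\<forall>k\<in>K. inner x k \<ge> 1) \<and> inner x y < 1"
proof -
  obtain a b where ab: "inner a y < b" "\<forall>k\<in>K. inner a k > b"
    using separating_hyperplane_closed_point[OF cv cl y] by blast
  obtain a0 b0 where a0: "0 < b0" "\<forall>k\<in>K. inner a0 k > b0"
    using separating_hyperplane_closed_0[OF cv cl z] by blast
  show ?thesis
  proof (cases "b > 0")
    case True
    show ?thesis
    proof (intro exI[of _ "(1/b) *\<^sub>R a"] conjI ballI)
      fix k assume "k \<in> K"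
      then have "inner a k > b" using ab by blast
      then show "inner ((1/b) *\<^sub>R a) k \<ge> 1" using True by (simp add: field_simps)
    next
      show "inner ((1/b) *\<^sub>R a) y < 1" using True ab by (simp add: field_simps)
    qed
  next
    case False
    have nn: "inner a k \<ge> 0" if k: "k \<in> K" for k
    proof (rule ccontr)
      assume neg: "\<not> inner a k \<ge> 0"
      define l where "l = 1 + (b - 1) / inner a k"
      have "(b - 1) / inner a k > 0" using neg False by (simp add: divide_neg_neg)
      then have l1: "l \<ge> 1" unfolding l_def by simp
      have "l *\<^sub>R k \<in> K" using sc l1 k by blast
      then have "inner a (l *\<^sub>R k) > b" using ab by blast
      moreover have "inner a (l *\<^sub>R k) = inner a k + (b - 1)"
        using neg by (simp add: l_def field_simps)
      ultimately show False using neg by simp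
    qed
    have ay: "inner a y < 0"
      using ab False by linarith
    define s where "s = (\<bar>inner a0 y / b0\<bar> + 1) / (- inner a y)"
    have s0: "s \<ge> 0" using ay unfolding s_def by (intro divide_nonneg_pos) auto
    have sy: "s * inner a y = - (\<bar>inner a0 y / b0\<bar> + 1)"
      using ay unfolding s_def by (simp add: field_simps)
    show ?thesis
    proof (intro exI[of _ "s *\<^sub>R a + (1/b0) *\<^sub>R a0"] conjI ballI)
      fix k assume k: "k \<in> K"
      have "s * inner a k \<ge> 0" using s0 nn[OF k] by simp
      moreover have "inner a0 k / b0 > 1" using a0 k by (simp add: field_simps)
      ultimately show "inner (s *\<^sub>R a + (1/b0) *\<^sub>R a0) k \<ge> 1"
        by (simp add: inner_add_left)
    next
      have "inner (s *\<^sub>R a + (1/b0) *\<^sub>R a0) y = s * inner a y + inner a0 y / b0"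
        by (simp add: inner_add_left)
      then show "inner (s *\<^sub>R a + (1/b0) *\<^sub>R a0) y < 1" using sy by linarith
    qed
  qed
qed

lemma polarT_props:
  fixes A :: "'a::euclidean_space set"
  assumes "A \<noteq> {}"
  shows "closed (polarT A) \<and> convex (polarT A) \<and> 0 \<notin> polarT A \<and>
         (\<forall>l::real. l \<ge> 1 \<longrightarrow> (\<lambda>x. l *\<^sub>R x) ` polarT A \<subseteq> polarT A)"
proof -
  have eq: "polarT A = (\<Inter>x\<in>A. {y. inner x y \<ge> 1})" unfolding polarT_def by auto
  have "closed (polarT A)" unfolding eq by (intro closed_INT ballI closed_halfspace_ge)
  moreover have "convex (polarT A)" unfolding eq by (intro convex_INT ballI convex_halfspace_ge)
  moreover have "0 \<notin> polarT A" using assms unfolding polarT_def by auto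
  moreover have "(\<lambda>x. l *\<^sub>R x) ` polarT A \<subseteq> polarT A" if l: "l \<ge> 1" for l :: real
  proof
    fix z assume "z \<in> (\<lambda>x. l *\<^sub>R x) ` polarT A"
    then obtain y where y: "y \<in> polarT A" "z = l *\<^sub>R y" by blast
    have "inner x z \<ge> 1" if "x \<in> A" for x
    proof -
      have "inner x y \<ge> 1" using y that unfolding polarT_def by blast
      then have "l * inner x y \<ge> 1 * 1" using l by (intro mult_mono) auto
      then show ?thesis using y by simp
    qed
    then show "z \<in> polarT A" unfolding polarT_def by blast
  qed
  ultimately show ?thesis by blast
qed

theorem lemma5p1:
  shows "{polarT K | K :: 'a::euclidean_space set. True} =
         insert UNIV {K :: 'a set. closed K \<and> convex K \<and> 0 \<notin> K \<and>
                        (\<forall>l::real. l \<ge> 1 \<longrightarrow> (\<lambda>x. l *\<^sub>R x) ` K \<subseteq> K)}"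
proof (rule set_eqI iffI)+
  fix S :: "'a set"
  assume "S \<in> {polarT K | K :: 'a::euclidean_space set. True}"
  then obtain A where S: "S = polarT A" by blast
  show "S \<in> insert UNIV {K :: 'a set. closed K \<and> convex K \<and> 0 \<notin> K \<and>
                        (\<forall>l::real. l \<ge> 1 \<longrightarrow> (\<lambda>x. l *\<^sub>R x) ` K \<subseteq> K)}"
  proof (cases "A = {}")
    case True
    then show ?thesis using S unfolding polarT_def by simp
  next
    case False
    then show ?thesis using S polarT_props[OF False] by simp
  qed
next
  fix S :: "'a set"
  assume "S \<in> insert UNIV {K :: 'a set. closed K \<and> convex K \<and> 0 \<notin> K \<and>
                        (\<forall>l::real. l \<ge> 1 \<longrightarrow> (\<lambda>x. l *\<^sub>R x) ` K \<subseteq> K)}"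
  then consider "S = UNIV" | "closed S" "convex S" "0 \<notin> S"
    "\<forall>l::real. l \<ge> 1 \<longrightarrow> (\<lambda>x. l *\<^sub>R x) ` S \<subseteq> S" by blast
  then show "S \<in> {polarT K | K :: 'a::euclidean_space set. True}"
  proof cases
    case 1
    then have "S = polarT {}" unfolding polarT_def by simp
    then show ?thesis by blast
  next
    case 2
    have "S = polarT (polarT S)"
    proof
      show "S \<subseteq> polarT (polarT S)"
        unfolding polarT_def by (auto simp: inner_commute)
      show "polarT (polarT S) \<subseteq> S"
      proof
        fix y assume y: "y \<in> polarT (polarT S)"
        show "y \<in> S"
        proof (rule ccontr)
          assume "y \<notin> S"
          then obtain x where x: "\<forall>k\<in>S. inner x k \<ge> 1" "inner x y < 1"
            using polar_sep[OF 2] by blast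
          have "x \<in> polarT S" using x(1) unfolding polarT_def by (simp add: inner_commute)
          then have "inner x y \<ge> 1" using y unfolding polarT_def by blast
          then show False using x(2) by simp
        qed
      qed
    qed
    then show ?thesis by blast
  qed
qed

end
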